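(* The action of $G=\mathrm{SL}_n(\mathbb C)$ on $\mathring X_{u,\beta}$ by simultaneous left multiplication on all weighted flags is free.
   Context: $G=\mathrm{SL}_n(\mathbb C)$, $B_+$ upper triangular, $U_+$ upper unitriangular matrices; $I=\{1,\dots,n-1\}$, $\pm I=I\sqcup(-I)$; $i^*=n-i$, $(-i)^*=-i^*$; $w_0$ longest element of $S_n$. $\phi_i:\mathrm{SL}_2\to G$ places a $2\times2$ block in rows/columns $i,i+1$; $\dot s_i=\phi_i\begin{pmatrix}0&-1\\1&0\end{pmatrix}$, $\dot w=\dot s_{j_1}\cdots\dot s_{j_l}$ for a reduced word of $w$. Weighted flags: elements of $G/U_+$. For $F=g_1U_+$, $F'=g_2U_+$: $F\xrightarrow{w}F'$ (strictly $w$-related) if $g_1^{-1}g_2\in U_+\dot wU_+$; $F\Rightarrow^{w}F'$ (weakly) if $g_1^{-1}g_2\in B_+\dot wB_+$. For $i\in\pm I$: $s_i^+=s_i,s_i^-=\mathrm{id}$ if $i>0$; $s_i^+=\mathrm{id},s_i^-=s_{-i}$ if $i<0$. Double braid word $\beta=(i_1,\dots,i_m)\in(\pm I)^m$, $u\in S_n$ with $u\le\beta$ (i.e. $u\le s^-_{i_m}*\cdots*s^-_{i_1}*s^+_{i_1}*\dots*s^+_{i_m}$ in Bruhat order, $*$ the Demazure product). $\mathring X_{u,\beta}$ is the variety of tuples $(X_0,\dots,X_m,Y_0,\dots,Y_m)$ of weighted flags with $X_c\xrightarrow{s^+_{i_c}}X_{c-1}$ and $Y_{c-1}\xrightarrow{s^-_{i_c^*}}Y_c$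 for $c\in[m]$ (strict $\mathrm{id}$-relation means equality), $Y_m\xrightarrow{w_0u}X_m$, and $Y_0\Rightarrow^{w_0}X_0$. *)

theory Defs
  imports "Jordan_Normal_Form.Determinant" "HOL-Library.Sublist"
begin

text \<open>Matrices are n x n complex matrices with 0-based indices; the simple
  reflection index i (1-based, 1 \<le> i \<le> n-1) acts on rows/columns i-1, i.
  Permutations in S_n are functions nat \<Rightarrow> nat permuting {1..n}.\<close>

definition SLn :: "nat \<Rightarrow> complex mat set" where
  "SLn n = {A \<in> carrier_mat n n. det A = 1}"

definition Bplus :: "nat \<Rightarrow> complex mat set" where
  "Bplus n = {A \<in> SLn n. \<forall>i<n. \<forall>j<n. j < i \<longrightarrow> A $$ (i, j) = 0}"

definition Uplus :: "nat \<Rightarrow> complex mat set" where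
  "Uplus n = {A \<in> carrier_mat n n. (\<forall>i<n. \<forall>j<n. j < i \<longrightarrow> A $$ (i, j) = 0)
                 \<and> (\<forall>i<n. A $$ (i, i) = 1)}"

text \<open>phi_i applied to [[0,-1],[1,0]].\<close>
definition dot_s :: "nat \<Rightarrow> nat \<Rightarrow> complex mat" where
  "dot_s n i = mat n n (\<lambda>(r, c).
      if r = i - 1 \<and> c = i then -1
      else if r = i \<and> c = i - 1 then 1
      else if (r = i - 1 \<or> r = i) \<and> r = c then 0
      else if r = c then 1 else 0)"

definition sperm :: "nat \<Rightarrow> nat \<Rightarrow> nat" where
  "sperm i = (\<lambda>k. if k = i then i + 1 else if k = i + 1 then i else k)"

definition word_prod :: "nat list \<Rightarrow> nat \<Rightarrow> nat" where
  "word_prod js = foldr (\<circ>) (map sperm js) id"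

definition is_word :: "nat \<Rightarrow> (nat \<Rightarrow> nat) \<Rightarrow> nat list \<Rightarrow> bool" where
  "is_word n w js \<longleftrightarrow> (\<forall>j\<in>set js. 1 \<le> j \<and> j < n) \<and> word_prod js = w"

definition perm_length :: "nat \<Rightarrow> (nat \<Rightarrow> nat) \<Rightarrow> nat" where
  "perm_length n w = (LEAST k. \<exists>js. is_word n w js \<and> length js = k)"

definition reduced_word :: "nat \<Rightarrow> (nat \<Rightarrow> nat) \<Rightarrow> nat list \<Rightarrow> bool" where
  "reduced_word n w js \<longleftrightarrow> is_word n w js \<and> length js = perm_length n w"

definition dotw :: "nat \<Rightarrow> (nat \<Rightarrow> nat) \<Rightarrow> complex mat" where
  "dotw n w = foldr (*) (map (dot_s n) (SOME js. reduced_word n w js)) (1\<^sub>m n)"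

definition w0 :: "nat \<Rightarrow> nat \<Rightarrow> nat" where
  "w0 n = (\<lambda>k. if 1 \<le> k \<and> k \<le> n then n + 1 - k else k)"

definition bruhat_le :: "nat \<Rightarrow> (nat \<Rightarrow> nat) \<Rightarrow> (nat \<Rightarrow> nat) \<Rightarrow> bool" where
  "bruhat_le n u w \<longleftrightarrow> (\<exists>js ks. reduced_word n w js \<and> subseq ks js \<and> word_prod ks = u)"

definition demazure :: "nat \<Rightarrow> nat list \<Rightarrow> nat \<Rightarrow> nat" where
  "demazure n js = foldl (\<lambda>w j. if perm_length n (w \<circ> sperm j) > perm_length n w
                                  then w \<circ> sperm j else w) id js"

definition splus :: "int \<Rightarrow> nat \<Rightarrow> nat" where
  "splus i = (if i > 0 then sperm (nat i) else id)"

definition sminus :: "int \<Rightarrow> nat \<Rightarrow> nat" where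
  "sminus i = (if i < 0 then sperm (nat (- i)) else id)"

definition istar :: "nat \<Rightarrow> int \<Rightarrow> int" where
  "istar n i = (if i > 0 then int n - i else - (int n + i))"

definition double_braid_word :: "nat \<Rightarrow> int list \<Rightarrow> bool" where
  "double_braid_word n \<beta> \<longleftrightarrow> (\<forall>i\<in>set \<beta>. i \<noteq> 0 \<and> \<bar>i\<bar> < int n)"

text \<open>u \<le> \<beta>: u \<le> s^-_{i_m} * ... * s^-_{i_1} * s^+_{i_1} * ... * s^+_{i_m}
  (identity factors omitted, as they do not change the Demazure product).\<close>
definition demazure_of_dbw :: "nat \<Rightarrow> int list \<Rightarrow> nat \<Rightarrow> nat" where
  "demazure_of_dbw n \<beta> = demazure n
     (rev (map (\<lambda>i. nat (- i)) (filter (\<lambda>i. i < 0) \<beta>)) @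
      map nat (filter (\<lambda>i. i > 0) \<beta>))"

text \<open>Weighted flags gU_+ represented by g \<in> SL_n.\<close>
definition strict_rel :: "nat \<Rightarrow> (nat \<Rightarrow> nat) \<Rightarrow> complex mat \<Rightarrow> complex mat \<Rightarrow> bool" where
  "strict_rel n w g1 g2 \<longleftrightarrow>
     (\<exists>a\<in>Uplus n. \<exists>b\<in>Uplus n. g2 = g1 * a * dotw n w * b)"

definition weak_rel :: "nat \<Rightarrow> (nat \<Rightarrow> nat) \<Rightarrow> complex mat \<Rightarrow> complex mat \<Rightarrow> bool" where
  "weak_rel n w g1 g2 \<longleftrightarrow>
     (\<exists>a\<in>Bplus n. \<exists>b\<in>Bplus n. g2 = g1 * a * dotw n w * b)"

definition same_flag :: "nat \<Rightarrow> complex mat \<Rightarrow> complex mat \<Rightarrow> bool" where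
  "same_flag n g1 g2 \<longleftrightarrow> (\<exists>a\<in>Uplus n. g2 = g1 * a)"

definition in_X :: "nat \<Rightarrow> (nat \<Rightarrow> nat) \<Rightarrow> int list
                    \<Rightarrow> (nat \<Rightarrow> complex mat) \<Rightarrow> (nat \<Rightarrow> complex mat) \<Rightarrow> bool" where
  "in_X n u \<beta> X Y \<longleftrightarrow> (let m = length \<beta> in
      (\<forall>c\<le>m. X c \<in> SLn n \<and> Y c \<in> SLn n)
    \<and> (\<forall>c\<in>{1..m}. strict_rel n (splus (\<beta> ! (c - 1))) (X c) (X (c - 1)))
    \<and> (\<forall>c\<in>{1..m}. strict_rel n (sminus (istar n (\<beta> ! (c - 1)))) (Y (c - 1)) (Y c))
    \<and> strict_rel n (w0 n \<circ> u) (Y m) (X m)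
    \<and> weak_rel n (w0 n) (Y 0) (X 0))"

end

theory Submission
  imports Defs
begin


lemma mult_entry:
  assumes "A \<in> carrier_mat n n" "B \<in> carrier_mat n n" "i < n" "j < n"
  shows "(A * B) $$ (i, j) = (\<Sum>k<n. A $$ (i, k) * B $$ (k, j))"
  using assms by (auto simp: scalar_prod_def lessThan_atLeast0 intro!: sum.cong)

definition UT :: "nat \<Rightarrow> complex mat \<Rightarrow> bool" where
  "UT n A \<longleftrightarrow> A \<in> carrier_mat n n \<and> (\<forall>i<n. \<forall>j<i. A $$ (i, j) = 0)"

lemma UT_mult:
  assumes "UT n A" "UT n B"
  shows "UT n (A * B)" "\<And>i. i < n \<Longrightarrow> (A * B) $$ (i, i) = A $$ (i, i) * B $$ (i, i)"
proof -
  have c: "A \<in> carrier_mat n n" "B \<in> carrier_mat n n" using assms UT_def by auto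
  have z: "\<And>i j. i < n \<Longrightarrow> j < i \<Longrightarrow> A $$ (i, j) = 0"
          "\<And>i j. i < n \<Longrightarrow> j < i \<Longrightarrow> B $$ (i, j) = 0" using assms UT_def by auto
  show "UT n (A * B)"
    unfolding UT_def
  proof (intro conjI allI impI)
    show "A * B \<in> carrier_mat n n" using c by auto
    fix i j assume ij: "i < n" "j < i"
    have "(A * B) $$ (i, j) = (\<Sum>k<n. A $$ (i, k) * B $$ (k, j))"
      using mult_entry[OF c] ij by auto
    also have "\<dots> = 0"
    proof (rule sum.neutral, intro ballI)
      fix k assume "k \<in> {..<n}"
      then show "A $$ (i, k) * B $$ (k, j) = 0" using z ij
        by (cases "k < i") auto
    qed
    finally show "(A * B) $$ (i, j) = 0" .
  qed
  fix i assume i: "i < n"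
  have "(A * B) $$ (i, i) = (\<Sum>k<n. A $$ (i, k) * B $$ (k, i))"
    using mult_entry[OF c] i by auto
  also have "\<dots> = (\<Sum>k<n. if k = i then A $$ (i, i) * B $$ (i, i) else 0)"
  proof (rule sum.cong[OF refl])
    fix k assume "k \<in> {..<n}"
    then show "A $$ (i, k) * B $$ (k, i) = (if k = i then A $$ (i, i) * B $$ (i, i) else 0)"
      using z i by (cases "k < i"; cases "k = i") auto
  qed
  also have "\<dots> = A $$ (i, i) * B $$ (i, i)" using i by simp
  finally show "(A * B) $$ (i, i) = A $$ (i, i) * B $$ (i, i)" .
qed

lemma inv_ex:
  fixes A :: "complex mat"
  assumes "A \<in> carrier_mat n n" "det A \<noteq> 0"
  shows "\<exists>B \<in> carrier_mat n n. B * A = 1\<^sub>m n \<and> A * B = 1\<^sub>m n"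
  using det_non_zero_imp_unit[OF assms, unfolded Units_def, of "()"]
  by (auto simp: ring_mat_def)

lemma UT_diag_nz:
  assumes "UT n A" "det A \<noteq> 0" "i < n"
  shows "A $$ (i, i) \<noteq> 0"
proof
  assume h: "A $$ (i, i) = 0"
  have "upper_triangular A" using assms(1) unfolding UT_def upper_triangular_def by auto
  hence "det A = prod_list (diag_mat A)" using assms(1) UT_def det_upper_triangular by blast
  moreover have "0 \<in> set (diag_mat A)" using h assms(1,3) unfolding UT_def diag_mat_def
    by (auto simp: image_iff intro!: bexI[of _ i])
  ultimately show False using assms(2) by (simp add: prod_list_zero_iff)
qed

lemma UT_inv:
  assumes "UT n A" "det A \<noteq> 0" "B \<in> carrier_mat n n" "B * A = 1\<^sub>m n"
  shows "UT n B"
proof -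
  have cA: "A \<in> carrier_mat n n" using assms UT_def by auto
  have zA: "\<And>i j. i < n \<Longrightarrow> j < i \<Longrightarrow> A $$ (i, j) = 0" using assms UT_def by auto
  have key: "\<forall>i<n. j < i \<longrightarrow> B $$ (i, j) = 0" for j
  proof (induction j rule: less_induct)
    case (less j)
    show ?case
    proof (intro allI impI)
      fix i assume i: "i < n" "j < i"
      have "0 = (B * A) $$ (i, j)" using assms(4) i by simp
      also have "\<dots> = (\<Sum>k<n. B $$ (i, k) * A $$ (k, j))"
        using mult_entry[OF assms(3) cA] i by auto
      also have "\<dots> = (\<Sum>k<n. if k = j then B $$ (i, j) * A $$ (j, j) else 0)"
      proof (rule sum.cong[OF refl])
        fix k assume k: "k \<in> {..<n}"
        show "B $$ (i, k) * A $$ (k, j) = (if k = j then B $$ (i, j) * A $$ (j, j) else 0)"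
        proof (cases "k < j")
          case True then show ?thesis using less i by auto
        next
          case False then show ?thesis using zA[of k j] k by (cases "k = j") auto
        qed
      qed
      also have "\<dots> = B $$ (i, j) * A $$ (j, j)" using i by simp
      finally show "B $$ (i, j) = 0" using UT_diag_nz[OF assms(1,2), of j] i by simp
    qed
  qed
  show ?thesis unfolding UT_def using key assms(3) by auto
qed



definition sw :: "nat \<Rightarrow> nat \<Rightarrow> nat" where
  "sw i r = (if r = i - 1 then i else if r = i then i - 1 else r)"

lemma dot_s_entry:
  assumes "1 \<le> i" "i < n" "r < n" "k < n"
  shows "dot_s n i $$ (r, k) = (if k = sw i r then (if r = i - 1 then -1 else 1) else 0)"
  using assms unfolding dot_s_def sw_def by auto

lemma dot_s_carrier: "dot_s n i \<in> carrier_mat n n"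
  unfolding dot_s_def by auto

lemma sperm_inv: "sperm i (sperm i x) = x"
  unfolding sperm_def by auto

lemma sperm_eq: "(sperm i x = y) \<longleftrightarrow> (x = sperm i y)"
  using sperm_inv by metis

lemma sw_sperm: "1 \<le> i \<Longrightarrow> Suc (sw i r) = sperm i (Suc r)"
  unfolding sw_def sperm_def by auto

lemma word_prod_Cons: "word_prod (j # js) = sperm j \<circ> word_prod js"
  unfolding word_prod_def by simp

lemma word_prod_append: "word_prod (xs @ ys) = word_prod xs \<circ> word_prod ys"
  by (induction xs) (auto simp: word_prod_Cons, simp add: word_prod_def)

lemma foldr_dot:
  assumes "\<forall>j\<in>set js. 1 \<le> j \<and> j < n"
  shows "foldr (*) (map (dot_s n) js) (1\<^sub>m n) \<in> carrier_mat n n \<and>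
    (\<forall>r<n. \<forall>c<n. foldr (*) (map (dot_s n) js) (1\<^sub>m n) $$ (r, c) \<noteq> 0 \<longleftrightarrow> Suc r = word_prod js (Suc c))"
  using assms
proof (induction js)
  case Nil
  then show ?case by (auto simp: word_prod_def)
next
  case (Cons i js)
  let ?F = "foldr (*) (map (dot_s n) js) (1\<^sub>m n)"
  have IH: "?F \<in> carrier_mat n n" "\<And>r c. r < n \<Longrightarrow> c < n \<Longrightarrow> ?F $$ (r, c) \<noteq> 0 \<longleftrightarrow> Suc r = word_prod js (Suc c)"
    using Cons by auto
  have i: "1 \<le> i" "i < n" using Cons.prems by auto
  have ct: "dot_s n i * ?F \<in> carrier_mat n n" by (rule mult_carrier_mat[OF dot_s_carrier IH(1)])
  { fix r c assume rc: "r < n" "c < n"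
    have swn: "sw i r < n" using i rc unfolding sw_def by auto
    have "(dot_s n i * ?F) $$ (r, c) = (\<Sum>k<n. dot_s n i $$ (r, k) * ?F $$ (k, c))"
      using mult_entry[OF dot_s_carrier IH(1)] rc by auto
    also have "\<dots> = (\<Sum>k<n. if k = sw i r then (if r = i - 1 then -1 else 1) * ?F $$ (sw i r, c) else 0)"
      by (rule sum.cong[OF refl]) (auto simp: dot_s_entry[OF i rc(1)])
    also have "\<dots> = (if r = i - 1 then -1 else 1) * ?F $$ (sw i r, c)" using swn by simp
    finally have "(dot_s n i * ?F) $$ (r, c) \<noteq> 0 \<longleftrightarrow> ?F $$ (sw i r, c) \<noteq> 0" by simp
    also have "\<dots> \<longleftrightarrow> Suc (sw i r) = word_prod js (Suc c)" using IH(2)[OF swn rc(2)] .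
    also have "\<dots> \<longleftrightarrow> Suc r = word_prod (i # js) (Suc c)"
      by (simp add: sw_sperm[OF i(1)] sperm_eq word_prod_Cons)
    finally have "(dot_s n i * ?F) $$ (r, c) \<noteq> 0 \<longleftrightarrow> Suc r = word_prod (i # js) (Suc c)" .
  }
  then show ?case using ct by simp
qed


fun Wd :: "nat \<Rightarrow> nat list" where
  "Wd 0 = []"
| "Wd (Suc m) = [1..<Suc m] @ Wd m"

definition revp :: "nat \<Rightarrow> nat \<Rightarrow> nat" where
  "revp m = (\<lambda>k. if 1 \<le> k \<and> k \<le> m then m + 1 - k else k)"

lemma wp_upt: "word_prod [1..<Suc m] = (\<lambda>k. if 1 \<le> k \<and> k \<le> m then k + 1 else if k = m + 1 then 1 else k)"
proof (induction m)
  case 0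
  then show ?case by (auto simp: word_prod_def)
next
  case (Suc m)
  have "word_prod [1..<Suc (Suc m)] = word_prod [1..<Suc m] \<circ> sperm (Suc m)"
    by (simp add: word_prod_append, simp add: word_prod_def)
  also have "\<dots> = (\<lambda>k. if 1 \<le> k \<and> k \<le> Suc m then k + 1 else if k = Suc m + 1 then 1 else k)"
  proof
    fix k
    show "(word_prod [1..<Suc m] \<circ> sperm (Suc m)) k = (if 1 \<le> k \<and> k \<le> Suc m then k + 1 else if k = Suc m + 1 then 1 else k)"
      unfolding comp_def Suc.IH
      by (cases "k = Suc m"; cases "k = Suc (Suc m)") (simp_all add: sperm_def)
  qed
  finally show ?case .
qed


lemma Wd_word: "word_prod (Wd m) = revp m \<and> (\<forall>j\<in>set (Wd m). 1 \<le> j \<and> j < m)"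
proof (induction m)
  case 0
  then show ?case by (auto simp: word_prod_def revp_def)
next
  case (Suc m)
  have "word_prod (Wd (Suc m)) = word_prod [1..<Suc m] \<circ> revp m"
    using Suc.IH by (simp only: Wd.simps word_prod_append)
  also have "\<dots> = revp (Suc m)"
  proof
    fix k
    show "(word_prod [1..<Suc m] \<circ> revp m) k = revp (Suc m) k"
    proof (cases "1 \<le> k \<and> k \<le> m")
      case True
      then have "revp m k = m + 1 - k" "1 \<le> m + 1 - k" "m + 1 - k \<le> m" by (auto simp: revp_def)
      then show ?thesis using True unfolding comp_def wp_upt by (simp add: revp_def)
    next
      case False
      then have "revp m k = k" by (auto simp: revp_def)
      then show ?thesis using False unfolding comp_def wp_upt by (cases "k = m + 1") (auto simp: revp_def)
    qed
  qed
  finally have "word_prod (Wd (Suc m)) = revp (Suc m)" .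
  moreover have "\<forall>j\<in>set (Wd (Suc m)). 1 \<le> j \<and> j < Suc m"
  proof
    fix j assume "j \<in> set (Wd (Suc m))"
    then have "j \<in> set [1..<Suc m] \<or> j \<in> set (Wd m)" by simp
    then show "1 \<le> j \<and> j < Suc m" using Suc.IH by auto
  qed
  ultimately show ?case by blast
qed


lemma w0_word: "is_word n (w0 n) (Wd n)"
proof -
  have "revp n = w0 n" by (simp add: revp_def w0_def)
  then show ?thesis using Wd_word[of n] unfolding is_word_def by metis
qed

lemma dotw0:
  shows "dotw n (w0 n) \<in> carrier_mat n n"
    "\<And>r c. r < n \<Longrightarrow> c < n \<Longrightarrow> dotw n (w0 n) $$ (r, c) \<noteq> 0 \<longleftrightarrow> r + c + 1 = n"
proof -
  have "\<exists>k js. is_word n (w0 n) js \<and> length js = k" using w0_word by blast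
  then have "\<exists>js. is_word n (w0 n) js \<and> length js = perm_length n (w0 n)"
    unfolding perm_length_def by (rule LeastI_ex)
  then have "\<exists>js. reduced_word n (w0 n) js" unfolding reduced_word_def by blast
  then have R: "reduced_word n (w0 n) (SOME js. reduced_word n (w0 n) js)" by (rule someI_ex)
  let ?js = "SOME js. reduced_word n (w0 n) js"
  have W: "\<forall>j\<in>set ?js. 1 \<le> j \<and> j < n" "word_prod ?js = w0 n"
    using R unfolding reduced_word_def is_word_def by blast+
  show "dotw n (w0 n) \<in> carrier_mat n n" unfolding dotw_def by (rule conjunct1[OF foldr_dot[OF W(1)]])
  fix r c assume rc: "r < n" "c < n"
  show "dotw n (w0 n) $$ (r, c) \<noteq> 0 \<longleftrightarrow> r + c + 1 = n"
  proof -
    have "dotw n (w0 n) $$ (r, c) \<noteq> 0 \<longleftrightarrow> Suc r = w0 n (Suc c)"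
      unfolding dotw_def using conjunct2[OF foldr_dot[OF W(1)]] rc W(2) by metis
    also have "w0 n (Suc c) = n - c" using rc by (simp add: w0_def)
    finally show ?thesis using rc by linarith
  qed
qed



lemma Uplus_UT: "a \<in> Uplus n \<Longrightarrow> UT n a \<and> (\<forall>i<n. a $$ (i, i) = 1)"
  unfolding Uplus_def UT_def by auto

lemma main_alg:
  fixes Y g p q M a b :: "complex mat"
  assumes Y: "Y \<in> carrier_mat n n" "det Y \<noteq> 0"
  and g: "g \<in> carrier_mat n n"
  and p: "UT n p" "det p \<noteq> 0" and q: "UT n q" "det q \<noteq> 0"
  and M: "M \<in> carrier_mat n n" "\<And>r c. r < n \<Longrightarrow> c < n \<Longrightarrow> M $$ (r, c) \<noteq> 0 \<longleftrightarrow> r + c + 1 = n"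
  and a: "a \<in> Uplus n" and b: "b \<in> Uplus n"
  and e1: "g * (Y * p * M * q) = Y * p * M * q * a"
  and e2: "g * Y = Y * b"
  shows "g = 1\<^sub>m n"
proof -
  obtain Yi where Yi: "Yi \<in> carrier_mat n n" "Yi * Y = 1\<^sub>m n" "Y * Yi = 1\<^sub>m n" using inv_ex[OF Y] by blast
  have pc: "p \<in> carrier_mat n n" using p UT_def by auto
  have qc: "q \<in> carrier_mat n n" using q UT_def by auto
  obtain pi where pi: "pi \<in> carrier_mat n n" "pi * p = 1\<^sub>m n" "p * pi = 1\<^sub>m n" using inv_ex[OF pc p(2)] by blast
  obtain qi where qi: "qi \<in> carrier_mat n n" "qi * q = 1\<^sub>m n" "q * qi = 1\<^sub>m n" using inv_ex[OF qc q(2)] by blast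
  have piU: "UT n pi" by (rule UT_inv[OF p pi(1,2)])
  have qiU: "UT n qi" by (rule UT_inv[OF q qi(1,2)])
  have aU: "UT n a" "\<And>i. i < n \<Longrightarrow> a $$ (i, i) = 1" using Uplus_UT[OF a] by auto
  have bU: "UT n b" "\<And>i. i < n \<Longrightarrow> b $$ (i, i) = 1" using Uplus_UT[OF b] by auto
  have ac: "a \<in> carrier_mat n n" and bc: "b \<in> carrier_mat n n" using aU bU UT_def by auto
  note C = Y(1) Yi(1) g pc qc pi(1) qi(1) M(1) ac bc


  note AS = assoc_mult_mat[of _ n n _ n _ n]
  have "Y * (b * (p * (M * q))) = (Y * b) * (p * (M * q))" using C by (simp add: AS)
  also have "\<dots> = g * Y * (p * (M * q))" using e2 by simp
  also have "\<dots> = g * (Y * (p * (M * q)))" using C by (simp add: AS)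
  also have "\<dots> = Y * (p * (M * (q * a)))" using e1 C by (simp add: AS)
  finally have s1: "Y * (b * (p * (M * q))) = Y * (p * (M * (q * a)))" .
  have s2: "b * (p * (M * q)) = p * (M * (q * a))"
  proof -
    have "b * (p * (M * q)) = (Yi * Y) * (b * (p * (M * q)))" using Yi C by simp
    also have "\<dots> = Yi * (Y * (b * (p * (M * q))))" using C by (simp add: AS)
    also have "\<dots> = Yi * (Y * (p * (M * (q * a))))" using s1 by simp
    also have "\<dots> = (Yi * Y) * (p * (M * (q * a)))" using C by (simp add: AS)
    also have "\<dots> = p * (M * (q * a))" using Yi C by simp
    finally show ?thesis .
  qed
  define B' where "B' = pi * b * p"
  define A' where "A' = q * a * qi"
  have s3: "B' * M = M * A'"
  proof -
    have "B' * M = pi * (b * (p * (M * q))) * qi"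
    proof -
      have "pi * (b * (p * (M * q))) * qi = pi * (b * (p * (M * (q * qi))))" using C by (simp add: AS)
      also have "\<dots> = B' * M" using C qi unfolding B'_def by (simp add: AS)
      finally show ?thesis by simp
    qed
    also have "\<dots> = pi * (p * (M * (q * a))) * qi" using s2 by simp
    also have "\<dots> = (pi * p) * (M * (q * (a * qi)))" using C by (simp add: AS)
    also have "\<dots> = M * A'" using C pi unfolding A'_def by (simp add: AS)
    finally show ?thesis .
  qed
  have B'U: "UT n B'" "\<And>i. i < n \<Longrightarrow> B' $$ (i, i) = 1"
  proof -
    have 1: "UT n (pi * b)" using UT_mult[OF piU bU(1)] by auto
    show "UT n B'" unfolding B'_def using UT_mult[OF 1 p(1)] by auto
    fix i assume i: "i < n"
    have "B' $$ (i, i) = pi $$ (i, i) * b $$ (i, i) * p $$ (i, i)"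
      unfolding B'_def using UT_mult(2)[OF 1 p(1) i] UT_mult(2)[OF piU bU(1) i] by simp
    also have "\<dots> = (pi * p) $$ (i, i)" using UT_mult(2)[OF piU p(1) i] bU(2)[OF i] by simp
    finally show "B' $$ (i, i) = 1" using pi i by simp
  qed
  have A'U: "UT n A'"
  proof -
    have 1: "UT n (q * a)" using UT_mult[OF q(1) aU(1)] by auto
    show "UT n A'" unfolding A'_def using UT_mult[OF 1 qiU] by auto
  qed
  have B'c: "B' \<in> carrier_mat n n" and A'c: "A' \<in> carrier_mat n n" using B'U A'U UT_def by auto
  have B'z: "B' $$ (r, k) = 0" if rk: "r < k" "k < n" for r k
  proof -
    define c where "c = n - 1 - k"
    have c: "c < n" "k + c + 1 = n" using rk c_def by auto
    have "(B' * M) $$ (r, c) = (\<Sum>l<n. B' $$ (r, l) * M $$ (l, c))"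
      using mult_entry[OF B'c M(1)] rk c by auto
    also have "\<dots> = (\<Sum>l<n. if l = k then B' $$ (r, k) * M $$ (k, c) else 0)"
    proof (rule sum.cong[OF refl])
      fix l assume l: "l \<in> {..<n}"
      show "B' $$ (r, l) * M $$ (l, c) = (if l = k then B' $$ (r, k) * M $$ (k, c) else 0)"
      proof (cases "l = k")
        case False
        then have "M $$ (l, c) = 0" using M(2)[of l c] l c by auto
        then show ?thesis using False by simp
      qed simp
    qed
    also have "\<dots> = B' $$ (r, k) * M $$ (k, c)" using rk by simp
    finally have L: "(B' * M) $$ (r, c) = B' $$ (r, k) * M $$ (k, c)" .
    have "(M * A') $$ (r, c) = (\<Sum>l<n. M $$ (r, l) * A' $$ (l, c))"
      using mult_entry[OF M(1) A'c] rk c by auto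
    also have "\<dots> = 0"
    proof (rule sum.neutral, intro ballI)
      fix l assume l: "l \<in> {..<n}"
      show "M $$ (r, l) * A' $$ (l, c) = 0"
      proof (cases "r + l + 1 = n")
        case True
        then have "c < l" using c rk by auto
        then have "A' $$ (l, c) = 0" using A'U l unfolding UT_def by auto
        then show ?thesis by simp
      next
        case False
        then have "M $$ (r, l) = 0" using M(2)[of r l] l rk by auto
        then show ?thesis by simp
      qed
    qed
    finally have "B' $$ (r, k) * M $$ (k, c) = 0" using L s3 by simp
    moreover have "M $$ (k, c) \<noteq> 0" using M(2)[of k c] c rk by auto
    ultimately show ?thesis by simp
  qed
  have B'1: "B' = 1\<^sub>m n"
  proof (rule eq_matI)
    fix i j assume ij: "i < dim_row (1\<^sub>m n)" "j < dim_col (1\<^sub>m n)"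
    then have ij': "i < n" "j < n" by auto
    show "B' $$ (i, j) = 1\<^sub>m n $$ (i, j)"
    proof (cases i j rule: linorder_cases)
      case less then show ?thesis using B'z ij' by simp
    next
      case equal then show ?thesis using B'U(2) ij' by simp
    next
      case greater then show ?thesis using B'U(1) ij' unfolding UT_def by simp
    qed
  qed (use B'c in auto)
  have bp: "b * p = p"
  proof -
    have "b * p = (p * pi) * (b * p)" using C pi by simp
    also have "\<dots> = p * B'" unfolding B'_def using C by (simp add: AS)
    also have "\<dots> = p" using B'1 C by simp
    finally show ?thesis .
  qed
  have b1: "b = 1\<^sub>m n"
  proof -
    have "b = b * (p * pi)" using C pi by simp
    also have "\<dots> = (b * p) * pi" using C by (simp add: AS)
    also have "\<dots> = 1\<^sub>m n" using bp pi by simp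
    finally show ?thesis .
  qed
  have "g = g * (Y * Yi)" using C Yi by simp
  also have "\<dots> = (g * Y) * Yi" using C by (simp add: AS)
  also have "\<dots> = 1\<^sub>m n" using e2 b1 C Yi by simp
  finally show ?thesis .
qed


lemma Bplus_UT: "p \<in> Bplus n \<Longrightarrow> UT n p \<and> det p \<noteq> 0"
  unfolding Bplus_def SLn_def UT_def by auto

theorem proposition6p8:
  fixes n :: nat and u :: "nat \<Rightarrow> nat" and \<beta> :: "int list"
    and X Y :: "nat \<Rightarrow> complex mat" and g :: "complex mat"
  assumes "n \<ge> 1"
    and "u permutes {1..n}"
    and "double_braid_word n \<beta>"
    and "bruhat_le n u (demazure_of_dbw n \<beta>)"
    and "in_X n u \<beta> X Y"
    and "g \<in> SLn n"
    and "\<forall>c\<le>length \<beta>. same_flag n (X c) (g * X c) \<and> same_flag n (Y c) (g * Y c)"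
  shows "g = 1\<^sub>m n"
proof -
  have XY: "X 0 \<in> SLn n" "Y 0 \<in> SLn n" "weak_rel n (w0 n) (Y 0) (X 0)"
    using assms(5) unfolding in_X_def Let_def by auto
  obtain p q where pq: "p \<in> Bplus n" "q \<in> Bplus n" "X 0 = Y 0 * p * dotw n (w0 n) * q"
    using XY(3) unfolding weak_rel_def by blast
  have sf: "same_flag n (X 0) (g * X 0)" "same_flag n (Y 0) (g * Y 0)" using assms(7) by auto
  obtain a where a: "a \<in> Uplus n" "g * X 0 = X 0 * a" using sf(1) unfolding same_flag_def by blast
  obtain b where b: "b \<in> Uplus n" "g * Y 0 = Y 0 * b" using sf(2) unfolding same_flag_def by blast
  show ?thesis
  proof (rule main_alg)
    show "Y 0 \<in> carrier_mat n n" "det (Y 0) \<noteq> 0" using XY unfolding SLn_def by auto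
    show "g \<in> carrier_mat n n" using assms(6) unfolding SLn_def by auto
    show "UT n p" "det p \<noteq> 0" "UT n q" "det q \<noteq> 0" using Bplus_UT pq by auto
    show "dotw n (w0 n) \<in> carrier_mat n n" by (rule dotw0(1))
    show "\<And>r c. r < n \<Longrightarrow> c < n \<Longrightarrow> dotw n (w0 n) $$ (r, c) \<noteq> 0 \<longleftrightarrow> r + c + 1 = n"
      by (rule dotw0(2))
    show "a \<in> Uplus n" "b \<in> Uplus n" by (fact a(1), fact b(1))
    show "g * (Y 0 * p * dotw n (w0 n) * q) = Y 0 * p * dotw n (w0 n) * q * a"
      using a(2) pq(3) by simp
    show "g * Y 0 = Y 0 * b" by (fact b(2))
  qed
qed

end
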